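(* Let $G>0$, $T>0$, let $F\colon\mathbb R\to\mathbb R$ be continuous and $T$-periodic, and let $a\in(0,1)$ be such that $\mathbb R\times\Gamma_a$ is a bound set for $v_\lambda$ for every $\lambda\in[0,1]$. Then there exists $b>0$ such that $\mathbb R\times(\Gamma_a\cap\Delta_b)$ is a bound set for $v_\lambda$ for all $\lambda\in[0,1]$.
   Context: For $\lambda\in[0,1]$ consider on $\mathbb R\times\Omega$, $\Omega=(-1,1)\times\mathbb R$, the system $\dot t=1$, $\dot x=p$, $\dot p=\big(G\sqrt{1-x^2}-\frac{p^2}{1-x^2}\big)x-\lambda(1-x^2)F(t)$, with right-hand side $v_\lambda(t,x,p)$ and local flow $\phi^\lambda$ (solutions are unique). For $0<a<1$ and $b>0$, $\Gamma_a=\{(x,p)\in\mathbb R^2:|x|\le a\}$ and $\Delta_b=\{(x,p)\in\mathbb R^2:|x|<1,\ b|x|+|p|\le b\}$. A closed set $E\subset\mathbb R\times\Omega$ is a bound set for $v_\lambda$ if for every $\epsilon>0$ there is no point $z\in\partial E$ with $\phi^\lambda_s(z)\in E$ for all $s\in(-\epsilon,\epsilon)$. *)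

theory Defs
  imports "HOL-Analysis.Analysis"
begin

definition Omega :: "(real \<times> real) set" where
  "Omega = {(x, p). \<bar>x\<bar> < 1}"

definition vfield :: "real \<Rightarrow> (real \<Rightarrow> real) \<Rightarrow> real \<Rightarrow> real \<times> real \<times> real \<Rightarrow> real \<times> real \<times> real" where
  "vfield G F lam z = (case z of (t, x, p) \<Rightarrow>
     (1, p, (G * sqrt (1 - x\<^sup>2) - p\<^sup>2 / (1 - x\<^sup>2)) * x - lam * (1 - x\<^sup>2) * F t))"

definition is_solution :: "real \<Rightarrow> (real \<Rightarrow> real) \<Rightarrow> real \<Rightarrow> (real \<Rightarrow> real \<times> real \<times> real) \<Rightarrow> real set \<Rightarrow> bool" where
  "is_solution G F lam gamma I \<longleftrightarrow>
     (\<forall>s\<in>I. gamma s \<in> UNIV \<times> Omega \<and>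
        (gamma has_vector_derivative vfield G F lam (gamma s)) (at s))"

text \<open>By uniqueness of solutions, the flow phi_s(z) is defined
  and in E for all s in (-eps,eps) iff some solution through z on (-eps,eps) stays in E.\<close>
definition bound_set :: "real \<Rightarrow> (real \<Rightarrow> real) \<Rightarrow> real \<Rightarrow> (real \<times> real \<times> real) set \<Rightarrow> bool" where
  "bound_set G F lam E \<longleftrightarrow>
     E \<subseteq> UNIV \<times> Omega \<and> closedin (top_of_set (UNIV \<times> Omega)) E \<and>
     (\<forall>eps>0. \<not> (\<exists>z\<in>frontier E. \<exists>gamma. gamma 0 = z \<and>
        is_solution G F lam gamma {-eps<..<eps} \<and> (\<forall>s\<in>{-eps<..<eps}. gamma s \<in> E)))"

definition Gamma_set :: "real \<Rightarrow> (real \<times> real) set" where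
  "Gamma_set a = {(x, p). \<bar>x\<bar> \<le> a}"

definition Delta_set :: "real \<Rightarrow> (real \<times> real) set" where
  "Delta_set b = {(x, p). \<bar>x\<bar> < 1 \<and> b * \<bar>x\<bar> + \<bar>p\<bar> \<le> b}"

end

theory Submission
  imports Defs
begin

lemma periodic_bound:
  fixes F :: "real \<Rightarrow> real" and T :: real
  assumes "T > 0" "continuous_on UNIV F" "\<forall>t. F (t + T) = F t"
  shows "\<exists>M\<ge>0. \<forall>t. \<bar>F t\<bar> \<le> M"
proof -
  have "compact (F ` {0..T})"
    using assms(2) by (intro compact_continuous_image) (auto intro: continuous_on_subset)
  then have "bounded (F ` {0..T})" by (rule compact_imp_bounded)
  then obtain M where M: "\<forall>y\<in>F ` {0..T}. norm y \<le> M"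
    unfolding bounded_iff by blast
  have per: "F (s + real n * T) = F s" for s n
  proof (induction n)
    case 0 then show ?case by simp
  next
    case (Suc n)
    have "F (s + real (Suc n) * T) = F ((s + real n * T) + T)" by (simp add: algebra_simps)
    also have "\<dots> = F (s + real n * T)" using assms(3) by simp
    finally show ?case using Suc by simp
  qed
  have perz: "F (s + real_of_int k * T) = F s" for s k
  proof (cases "k \<ge> 0")
    case True
    then obtain n where "k = int n" using nonneg_int_cases by blast
    then show ?thesis using per by simp
  next
    case False
    then have "-k \<ge> 0" by simp
    then obtain n where n: "-k = int n" using nonneg_int_cases by blast
    then have "k = - int n" by simp
    then show ?thesis using per[of "s - real n * T" n] by simp
  qed
  have "\<bar>F t\<bar> \<le> M" for t
  proof -
    define k where "k = \<lfloor>t / T\<rfloor>"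
    define s where "s = t - real_of_int k * T"
    have k1: "real_of_int k \<le> t / T" unfolding k_def by (rule of_int_floor_le)
    have k2: "t / T < real_of_int k + 1" unfolding k_def by (rule real_of_int_floor_add_one_gt)
    have "real_of_int k * T \<le> t" using k1 assms(1) by (simp add: field_simps)
    moreover have "t < (real_of_int k + 1) * T" using k2 assms(1) by (simp add: field_simps)
    ultimately have "s \<in> {0..T}" unfolding s_def by (auto simp: algebra_simps)
    moreover have "F t = F s" using perz[of s k] unfolding s_def by simp
    ultimately show ?thesis using M by auto
  qed
  moreover have "M \<ge> 0" using M[rule_format, of "F 0"] assms(1) by auto
  ultimately show ?thesis by blast
qed


lemma frontier_Gamma:
  fixes a t x p :: real
  assumes "0 < a" "\<bar>x\<bar> = a"
  shows "(t, x, p) \<in> frontier (UNIV \<times> Gamma_set a)"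
proof -
  have in1: "(t, x, p) \<in> closure (UNIV \<times> Gamma_set a)"
    using assms by (intro closure_subset[THEN subsetD]) (auto simp: Gamma_set_def)
  have "(t, x, p) \<notin> interior (UNIV \<times> Gamma_set a)"
  proof
    assume "(t, x, p) \<in> interior (UNIV \<times> Gamma_set a)"
    then obtain e where e: "e > 0" "ball (t, x, p) e \<subseteq> UNIV \<times> Gamma_set a"
      by (auto simp: mem_interior)
    define y where "y = x + sgn x * e / 2"
    have "dist (t, x, p) (t, y, p) = e / 2"
      using assms e by (auto simp: y_def dist_Pair_Pair dist_real_def abs_mult sgn_if)
    then have "(t, y, p) \<in> ball (t, x, p) e" using e by simp
    then have "\<bar>y\<bar> \<le> a" using e by (auto simp: Gamma_set_def)
    moreover have "\<bar>y\<bar> = a + e / 2" using assms e by (auto simp: y_def sgn_if)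
    ultimately show False using e by simp
  qed
  then show ?thesis using in1 by (simp add: frontier_def)
qed


lemma key_alg:
  fixes a b u M G :: real
  assumes "0 \<le> u" "u \<le> a" "a < 1" "b \<ge> 1" "G \<ge> 0" "M \<ge> 0"
    and "b \<ge> (M + 1) / ((1 - a) / (1 + a))"
  shows "b * (b * (1 - u)) - (b * (1 - u))\<^sup>2 * u / (1 - u\<^sup>2) + G * sqrt (1 - u\<^sup>2) * u \<ge> M + 1"
proof -
  have u1: "u < 1" using assms by simp
  have eq: "b * (b * (1 - u)) - (b * (1 - u))\<^sup>2 * u / (1 - u\<^sup>2) = b\<^sup>2 * ((1 - u) / (1 + u))"
  proof -
    have f: "1 - u\<^sup>2 = (1 - u) * (1 + u)" by (simp add: power2_eq_square algebra_simps)
    have p: "(1 - u) > 0" "1 + u > 0" using u1 assms by auto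
    have "(b * (1 - u))\<^sup>2 * u / (1 - u\<^sup>2) = b\<^sup>2 * (1 - u) * u / (1 + u)"
    proof -
      have "1 - u * u \<noteq> 0" using p f by (simp add: power2_eq_square)
      then show ?thesis using p by (simp add: power2_eq_square field_simps)
    qed
    moreover have "b * (b * (1 - u)) - b\<^sup>2 * (1 - u) * u / (1 + u) = b\<^sup>2 * ((1 - u) / (1 + u))"
      using p by (simp add: power2_eq_square field_simps)
    ultimately show ?thesis by simp
  qed
  have c: "(1 - u) / (1 + u) \<ge> (1 - a) / (1 + a)"
    using assms u1 by (simp add: field_simps)
  have cpos: "(1 - a) / (1 + a) > 0" using assms by simp
  have "M + 1 \<le> b * ((1 - a) / (1 + a))"
  proof -
    have "(M + 1) / ((1 - a) / (1 + a)) * ((1 - a) / (1 + a)) \<le> b * ((1 - a) / (1 + a))"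
      using assms(7) cpos by (intro mult_right_mono) auto
    then show ?thesis using cpos by (metis nonzero_eq_divide_eq order_less_irrefl)
  qed
  also have "\<dots> \<le> b\<^sup>2 * ((1 - a) / (1 + a))"
    using assms cpos by (intro mult_right_mono) (auto simp: power2_eq_square)
  also have "\<dots> \<le> b\<^sup>2 * ((1 - u) / (1 + u))" using c by (intro mult_left_mono) auto
  finally have "M + 1 \<le> b\<^sup>2 * ((1 - u) / (1 + u))" .
  moreover have "G * sqrt (1 - u\<^sup>2) * u \<ge> 0"
    using assms u1 by (intro mult_nonneg_nonneg) (auto simp: power2_eq_square intro!: mult_le_one)
  ultimately show ?thesis using eq by linarith
qed


theorem lemma3p2:
  fixes G T a :: real and F :: "real \<Rightarrow> real"
  assumes "G > 0" and "T > 0"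
    and "continuous_on UNIV F" and "\<forall>t. F (t + T) = F t"
    and "0 < a" and "a < 1"
    and "\<forall>lam\<in>{0..1}. bound_set G F lam (UNIV \<times> Gamma_set a)"
  shows "\<exists>b>0. \<forall>lam\<in>{0..1}. bound_set G F lam (UNIV \<times> (Gamma_set a \<inter> Delta_set b))"
proof -
  obtain M where M0: "M \<ge> 0" and M: "\<forall>t. \<bar>F t\<bar> \<le> M"
    using periodic_bound assms(2,3,4) by blast
  define b where "b = (M + 1) / ((1 - a) / (1 + a)) + 1"
  have cpos: "(1 - a) / (1 + a) > 0" using assms by simp
  have bge: "b \<ge> (M + 1) / ((1 - a) / (1 + a))" unfolding b_def by simp
  have "(M + 1) / ((1 - a) / (1 + a)) \<ge> 0" using cpos M0 by (intro divide_nonneg_pos) auto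
  hence b1: "b \<ge> 1" unfolding b_def by linarith
  have bpos: "b > 0" using b1 by simp
  define E :: "(real \<times> real \<times> real) set" where "E = UNIV \<times> (Gamma_set a \<inter> Delta_set b)"
  have Eeq: "E = {z. \<bar>fst (snd z)\<bar> \<le> a} \<inter> {z. b * \<bar>fst (snd z)\<bar> + \<bar>snd (snd z)\<bar> \<le> b}"
    using assms(6) by (auto simp: E_def Gamma_set_def Delta_set_def)
  have closedE: "closed E" unfolding Eeq
    by (intro closed_Int closed_Collect_le continuous_intros)
  have EO: "E \<subseteq> UNIV \<times> Omega"
    by (auto simp: E_def Omega_def Delta_set_def)
  show ?thesis
  proof (intro exI[of _ b] conjI ballI)
    show "b > 0" by (rule bpos)
    fix lam :: real assume lam: "lam \<in> {0..1}"
    show "bound_set G F lam (UNIV \<times> (Gamma_set a \<inter> Delta_set b))"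
      unfolding bound_set_def E_def[symmetric]
    proof (intro conjI allI impI)
      show "E \<subseteq> UNIV \<times> Omega" by (rule EO)
      show "closedin (top_of_set (UNIV \<times> Omega)) E" by (rule closed_subset[OF EO closedE])
      fix eps :: real assume eps: "eps > 0"
      show "\<not> (\<exists>z\<in>frontier E. \<exists>gamma. gamma 0 = z \<and>
        is_solution G F lam gamma {-eps<..<eps} \<and> (\<forall>s\<in>{-eps<..<eps}. gamma s \<in> E))"
      proof
        assume "\<exists>z\<in>frontier E. \<exists>gamma. gamma 0 = z \<and>
          is_solution G F lam gamma {-eps<..<eps} \<and> (\<forall>s\<in>{-eps<..<eps}. gamma s \<in> E)"
        then obtain z gamma where zf: "z \<in> frontier E" and g0: "gamma 0 = z"
          and sol: "is_solution G F lam gamma {-eps<..<eps}"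
          and inE: "\<forall>s\<in>{-eps<..<eps}. gamma s \<in> E" by blast
        obtain t0 x0 p0 where z: "z = (t0, x0, p0)" by (cases z) auto
        have zE: "z \<in> E" using zf closedE frontier_subset_closed by blast
        hence xa: "\<bar>x0\<bar> \<le> a" and bx: "b * \<bar>x0\<bar> + \<bar>p0\<bar> \<le> b"
          by (auto simp: E_def Gamma_set_def Delta_set_def z)
        show False
        proof (cases "\<bar>x0\<bar> = a")
          case True
          have "z \<in> frontier (UNIV \<times> Gamma_set a)" using frontier_Gamma True assms(5) z by simp
          moreover have "\<forall>s\<in>{-eps<..<eps}. gamma s \<in> UNIV \<times> Gamma_set a"
            using inE by (auto simp: E_def)
          ultimately show False using assms(7) lam eps g0 sol unfolding bound_set_def by blast
        next
          case False
          hence xlt: "\<bar>x0\<bar> < a" using xa by simp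
          have beq: "b * \<bar>x0\<bar> + \<bar>p0\<bar> = b"
          proof (rule ccontr)
            assume "b * \<bar>x0\<bar> + \<bar>p0\<bar> \<noteq> b"
            hence lt: "b * \<bar>x0\<bar> + \<bar>p0\<bar> < b" using bx by simp
            define U :: "(real \<times> real \<times> real) set" where "U = {z. \<bar>fst (snd z)\<bar> < a} \<inter> {z. b * \<bar>fst (snd z)\<bar> + \<bar>snd (snd z)\<bar> < b}"
            have "open U" unfolding U_def by (intro open_Int open_Collect_less continuous_intros)
            moreover have "U \<subseteq> E" unfolding U_def Eeq by auto
            ultimately have "U \<subseteq> interior E" by (rule interior_maximal[rotated])
            moreover have "z \<in> U" using xlt lt z U_def by simp
            ultimately have "z \<in> interior E" by blast
            thus False using zf by (simp add: frontier_def)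
          qed
          define \<sigma> where "\<sigma> = (if x0 \<ge> 0 then 1 else -1::real)"
          define \<tau> where "\<tau> = (if p0 \<ge> 0 then 1 else -1::real)"
          have sx: "\<sigma> * x0 = \<bar>x0\<bar>" and tp: "\<tau> * p0 = \<bar>p0\<bar>" and ss: "\<sigma> * \<sigma> = 1"
            and tt: "\<tau> * \<tau> = 1" and as: "\<bar>\<sigma>\<bar> = 1" and at: "\<bar>\<tau>\<bar> = 1"
            by (auto simp: \<sigma>_def \<tau>_def)
          define v where "v = vfield G F lam (gamma 0)"
          have der: "(gamma has_vector_derivative v) (at 0)"
            using sol eps unfolding is_solution_def v_def by auto
          define L where "L = (\<lambda>w::real\<times>real\<times>real. b * \<sigma> * fst (snd w) + \<tau> * snd (snd w))"
          have bl: "bounded_linear L" unfolding L_def by (intro bounded_linear_intros)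
          have "((\<lambda>s. L (gamma s)) has_vector_derivative L v) (at 0)"
            by (rule bounded_linear.has_vector_derivative[OF bl der])
          hence dk: "((\<lambda>s. L (gamma s)) has_real_derivative L v) (at 0)"
            by (simp add: has_real_derivative_iff_has_vector_derivative)
          have Lv0: "L v = 0"
          proof (rule DERIV_local_max[OF dk eps])
            show "\<forall>y. \<bar>0 - y\<bar> < eps \<longrightarrow> L (gamma y) \<le> L (gamma 0)"
            proof (intro allI impI)
              fix y :: real assume "\<bar>0 - y\<bar> < eps"
              hence "y \<in> {-eps<..<eps}" by (auto simp: abs_less_iff)
              hence "gamma y \<in> E" using inE by blast
              then obtain t1 x1 p1 where gy: "gamma y = (t1, x1, p1)" and bx1: "b * \<bar>x1\<bar> + \<bar>p1\<bar> \<le> b"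
                by (cases "gamma y") (auto simp: E_def Delta_set_def)
              have "\<sigma> * x1 \<le> \<bar>x1\<bar>" unfolding \<sigma>_def by auto
              moreover have "\<tau> * p1 \<le> \<bar>p1\<bar>" unfolding \<tau>_def by auto
              ultimately have "L (gamma y) \<le> b * \<bar>x1\<bar> + \<bar>p1\<bar>"
                unfolding L_def gy using bpos by (simp add: mult.assoc mult_left_mono add_mono)
              also have "\<dots> \<le> b" by (rule bx1)
              also have "b = L (gamma 0)" unfolding L_def g0 z using beq sx tp by (simp add: mult.assoc)
              finally show "L (gamma y) \<le> L (gamma 0)" .
            qed
          qed
          define u where "u = \<bar>x0\<bar>"
          define q where "q = \<bar>p0\<bar>"
          define A where "A = b * (b * (1 - u)) - (b * (1 - u))\<^sup>2 * u / (1 - u\<^sup>2) + G * sqrt (1 - u\<^sup>2) * u"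
          define B where "B = lam * (1 - u\<^sup>2) * F t0"
          have q: "q = b * (1 - u)" using beq unfolding u_def q_def by (simp add: algebra_simps)
          have x0: "x0 = \<sigma> * u" using sx ss unfolding u_def by (metis mult.assoc mult_1)
          have p0: "p0 = \<tau> * q" using tp tt unfolding q_def by (metis mult.assoc mult_1)
          have sq: "x0\<^sup>2 = u\<^sup>2" "p0\<^sup>2 = q\<^sup>2" unfolding u_def q_def by simp_all
          have "L v = b * \<sigma> * p0 + \<tau> * ((G * sqrt (1 - u\<^sup>2) - q\<^sup>2 / (1 - u\<^sup>2)) * x0 - lam * (1 - u\<^sup>2) * F t0)"
            by (simp add: L_def v_def vfield_def g0 z sq)
          also have "\<dots> = \<sigma> * \<tau> * A - \<tau> * B"
            unfolding A_def B_def q[symmetric] by (simp add: x0 p0 algebra_simps)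
          finally have Lv: "L v = \<sigma> * \<tau> * A - \<tau> * B" .
          have Ab: "A \<ge> M + 1" unfolding A_def
            by (rule key_alg) (use xa M0 assms bge b1 in \<open>auto simp: u_def\<close>)
          have u1: "u < 1" using xa assms(6) u_def by simp
          have "\<bar>B\<bar> \<le> M"
          proof -
            have u0: "0 \<le> u" unfolding u_def by simp
            have "u\<^sup>2 \<le> 1" using u0 u1 by (simp add: power_le_one)
            hence u2: "0 \<le> 1 - u\<^sup>2" "1 - u\<^sup>2 \<le> 1" by simp_all
            have l: "0 \<le> lam" "lam \<le> 1" using lam by auto
            have "\<bar>B\<bar> = lam * (1 - u\<^sup>2) * \<bar>F t0\<bar>" unfolding B_def using l u2
              by (simp add: abs_mult)
            also have "\<dots> \<le> 1 * 1 * M" using l u2 M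
              by (intro mult_mono) auto
            finally show ?thesis by simp
          qed
          moreover have "\<bar>\<sigma> * \<tau> * A\<bar> = A" using as at Ab M0 by (simp add: abs_mult)
          moreover have "\<bar>\<tau> * B\<bar> = \<bar>B\<bar>" using at by (simp add: abs_mult)
          ultimately have "\<bar>L v\<bar> \<ge> 1" unfolding Lv
            using Ab abs_triangle_ineq2[of "\<sigma> * \<tau> * A" "\<tau> * B"] by linarith
          thus False using Lv0 by simp
        qed
      qed
    qed
  qed
qed

end
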